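(* For every sequence ${\mathbf s}$ in $\widehat{\mathcal S}$ we have $E_T({\mathbf s})=P({\mathbf s})(F_T({\mathbf s}))$. In particular ${\mathcal X}_T({\mathbf s})=P({\mathbf s})({\mathcal Y}_T({\mathbf s}))$.
   Context: $R$ irreducible reduced finite root system (positive roots $R^+$, simple roots $\Pi$, highest root $\gamma$); $\widehat X=X\oplus\mathbb Z$, $\delta=(0,-1)$, affine roots $\widehat R$. $\widehat{\mathcal W}$ generated by $s_{\alpha,n}(v,m)=(v-(\langle\alpha,v\rangle-mn)\alpha^\vee,m)$, acting contragrediently on $\widehat X$; $\widehat{\mathcal S}=\{s_{\alpha,0}:\alpha\in\Pi\}\cup\{s_{\gamma,1}\}$ with simple affine roots $\alpha$ resp. $-\gamma+\delta$. $T$: commutative unital domain, $2$ not a zero divisor, affine roots nonzero in $\widehat X\otimes T$; $S_T$ symmetric algebra of $\widehat X\otimes T$; $Q_T=S_T[2^{-1}][\alpha^{-1}:\alpha\in\widehat R]$. For ${\mathbf s}=(s_1,\dots,s_l)$: $I({\mathbf s})$ = strictly increasing tuples in $\{1,\dots,l\}$, $\operatorname{ev}(i_1,\dots,i_n)=s_{i_1}\cdots s_{i_n}$; ${\mathbf s}'=(s_1,\dots,s_{l-1})$, $I({\mathbf s})=I({\mathbf s}')\sqcup I({\mathbf s}')s_l$ ($\gamma s_l$ = $\gamma$ with $l$ appended); $\Delta(z)_\gamma=\Delta(z)_{\gamma s_l}=z_\gamma$ and $\Delta^-(z)_\gamma=z_\gamma$, $\Delta^-(z)_{\gamma s_l}=-z_\gamma$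 (maps $\bigoplus_{I({\mathbf s}')}Q_T\to\bigoplus_{I({\mathbf s})}Q_T$); every element of $\bigoplus_{I({\mathbf s})}Q_T$ is uniquely $\Delta(x)+\Delta^-(y)$; for an endomorphism $f$ of $\bigoplus_{I({\mathbf s}')}Q_T$, $\Delta^f(\Delta(x)+\Delta^-(y))=\Delta(f(x))+\Delta^-(f(y))$. $c^\lambda$ multiplies the $\sigma$-component by $\operatorname{ev}(\sigma)(\lambda)\otimes1$; $\alpha_l$ = simple affine root of $s_l$. Recursively: ${\mathcal X}_T(\emptyset)=S_T$, ${\mathcal X}_T({\mathbf s})=\Delta({\mathcal X}_T({\mathbf s}'))+c^{\alpha_l}\Delta({\mathcal X}_T({\mathbf s}'))$; ${\mathcal Y}_T(\emptyset)=S_T\subset Q_T$, ${\mathcal Y}_T({\mathbf s})=\Delta({\mathcal Y}_T({\mathbf s}'))+(c^{\alpha_l})^{-1}\Delta({\mathcal Y}_T({\mathbf s}'))$; $E_T(\emptyset)=F_T(\emptyset)=\{1\}$, $E_T({\mathbf s})=\Delta(E_T({\mathbf s}'))\cup c^{\alpha_l}\Delta(E_T({\mathbf s}'))$, $F_T({\mathbf s})=\Delta(F_T({\mathbf s}'))\cup(c^{\alpha_l})^{-1}\Delta(F_T({\mathbf s}'))$ (these are $S_T$-bases of ${\mathcal X}_T({\mathbf s})$, ${\mathcal Y}_T({\mathbf s})$); $P(\emptyset)=\operatorname{id}_{Q_T}$, $P({\mathbf s})=c^{\alpha_l}\circ\Delta^{P({\mathbf s}')}$, an endomorphism of $\bigoplus_{I({\mathbf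 s})}Q_T$. *)

theory Defs
  imports Complex_Main "HOL-Library.Poly_Mapping" "HOL-Library.Option_ord"
    "HOL-Computational_Algebra.Fraction_Field"
begin

section \<open>Root datum: X = Z^'i, dual lattice X^v = Z^'i, standard pairing\<close>

definition pair :: "('i::finite \<Rightarrow> int) \<Rightarrow> ('i \<Rightarrow> int) \<Rightarrow> int" where
  "pair lam v = (\<Sum>i\<in>UNIV. lam i * v i)"

text \<open>reflection s_alpha on X and s_{alpha^v} on X^v; cor = alpha |-> alpha^v\<close>
definition reflX :: "(('i::finite \<Rightarrow> int) \<Rightarrow> ('i \<Rightarrow> int)) \<Rightarrow> ('i \<Rightarrow> int) \<Rightarrow> ('i \<Rightarrow> int) \<Rightarrow> ('i \<Rightarrow> int)" where
  "reflX cor a lam = (\<lambda>i. lam i - pair lam (cor a) * a i)"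

definition reflXv :: "(('i::finite \<Rightarrow> int) \<Rightarrow> ('i \<Rightarrow> int)) \<Rightarrow> ('i \<Rightarrow> int) \<Rightarrow> ('i \<Rightarrow> int) \<Rightarrow> ('i \<Rightarrow> int)" where
  "reflXv cor a v = (\<lambda>i. v i - pair a v * cor a i)"

definition irreducible_reduced_root_datum ::
  "('i::finite \<Rightarrow> int) set \<Rightarrow> (('i \<Rightarrow> int) \<Rightarrow> ('i \<Rightarrow> int)) \<Rightarrow> bool" where
  "irreducible_reduced_root_datum R cor \<longleftrightarrow>
     finite R \<and> R \<noteq> {} \<and> (\<lambda>_. 0) \<notin> R \<and> inj_on cor R \<and>
     (\<forall>a\<in>R. pair a (cor a) = 2) \<and>
     (\<forall>a\<in>R. \<forall>b\<in>R. reflX cor a b \<in> R) \<and>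
     (\<forall>a\<in>R. \<forall>b\<in>R. cor (reflX cor a b) = reflXv cor a (cor b)) \<and>
     \<comment> \<open>reduced\<close>
     (\<forall>a\<in>R. \<forall>b\<in>R. (\<exists>c::rat. \<forall>i. of_int (b i) = c * of_int (a i)) \<longrightarrow> b = a \<or> b = (\<lambda>i. - a i)) \<and>
     \<comment> \<open>irreducible\<close>
     \<not> (\<exists>A B. A \<union> B = R \<and> A \<inter> B = {} \<and> A \<noteq> {} \<and> B \<noteq> {} \<and>
            (\<forall>a\<in>A. \<forall>b\<in>B. pair a (cor b) = 0))"

definition nonneg_comb :: "('i::finite \<Rightarrow> int) set \<Rightarrow> ('i \<Rightarrow> int) \<Rightarrow> bool" where
  "nonneg_comb Pi v \<longleftrightarrow> (\<exists>c. (\<forall>a\<in>Pi. c a \<ge> (0::int)) \<and> v = (\<lambda>i. \<Sum>a\<in>Pi. c a * a i))"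

definition is_base :: "('i::finite \<Rightarrow> int) set \<Rightarrow> ('i \<Rightarrow> int) set \<Rightarrow> bool" where
  "is_base R Pi \<longleftrightarrow> Pi \<subseteq> R \<and>
     (\<forall>c::('i \<Rightarrow> int) \<Rightarrow> int. (\<lambda>i. \<Sum>a\<in>Pi. c a * a i) = (\<lambda>_. 0) \<longrightarrow> (\<forall>a\<in>Pi. c a = 0)) \<and>
     (\<forall>b\<in>R. nonneg_comb Pi b \<or> nonneg_comb Pi (\<lambda>i. - b i))"

definition pos_roots :: "('i::finite \<Rightarrow> int) set \<Rightarrow> ('i \<Rightarrow> int) set \<Rightarrow> ('i \<Rightarrow> int) set" where
  "pos_roots R Pi = {b\<in>R. nonneg_comb Pi b}"

definition highest_root :: "('i::finite \<Rightarrow> int) set \<Rightarrow> ('i \<Rightarrow> int) set \<Rightarrow> ('i \<Rightarrow> int) \<Rightarrow> bool" where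
  "highest_root R Pi g \<longleftrightarrow> g \<in> pos_roots R Pi \<and> (\<forall>b\<in>R. nonneg_comb Pi (\<lambda>i. g i - b i))"

section \<open>Affine data. X-hat = X x Z, delta = (0,-1)\<close>

text \<open>affine roots alpha + k delta, alpha in R, k in Z\<close>
definition affine_roots :: "('i::finite \<Rightarrow> int) set \<Rightarrow> (('i \<Rightarrow> int) \<times> int) set" where
  "affine_roots R = {(a, k) | a k. a \<in> R}"

text \<open>The reflection s_{alpha,n} is encoded by the pair (alpha, n).
  Its contragredient action on X-hat (w.r.t. the pairing <(lam,k),(v,m)> = <lam,v> - k m).\<close>
definition act :: "(('i::finite \<Rightarrow> int) \<Rightarrow> ('i \<Rightarrow> int)) \<Rightarrow> (('i \<Rightarrow> int) \<times> int)
    \<Rightarrow> (('i \<Rightarrow> int) \<times> int) \<Rightarrow> (('i \<Rightarrow> int) \<times> int)" where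
  "act cor s x = (let a = fst s; n = snd s; lam = fst x; k = snd x; p = pair lam (cor a)
                  in ((\<lambda>i. lam i - p * a i), k - n * p))"

definition Shat :: "('i::finite \<Rightarrow> int) set \<Rightarrow> ('i \<Rightarrow> int) \<Rightarrow> (('i \<Rightarrow> int) \<times> int) set" where
  "Shat Pi g = {(a, 0) | a. a \<in> Pi} \<union> {(g, 1)}"

text \<open>simple affine root of a generator: alpha for s_{alpha,0}, -gamma+delta = (-gamma,-1) for s_{gamma,1}\<close>
definition sroot :: "('i::finite \<Rightarrow> int) \<Rightarrow> (('i \<Rightarrow> int) \<times> int) \<Rightarrow> (('i \<Rightarrow> int) \<times> int)" where
  "sroot g s = (if s = (g, 1) then ((\<lambda>i. - g i), -1) else (fst s, 0))"

text \<open>ev(i_1,...,i_n) = s_{i_1} ... s_{i_n}, acting on X-hat (indices 1-based)\<close>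
definition ev :: "(('i::finite \<Rightarrow> int) \<Rightarrow> ('i \<Rightarrow> int)) \<Rightarrow> (('i \<Rightarrow> int) \<times> int) list \<Rightarrow> nat list
    \<Rightarrow> (('i \<Rightarrow> int) \<times> int) \<Rightarrow> (('i \<Rightarrow> int) \<times> int)" where
  "ev cor s sig x = foldr (\<lambda>j y. act cor (s ! (j - 1)) y) sig x"

section \<open>S_T = Sym(X-hat (x) T) = T[x_j : j in 'i option], Q_T inside its fraction field\<close>

type_synonym ('i, 'T) ST = "('i option \<Rightarrow>\<^sub>0 nat) \<Rightarrow>\<^sub>0 'T"

definition var :: "'i option \<Rightarrow> ('i, 'T::comm_ring_1) ST" where
  "var j = Poly_Mapping.single (Poly_Mapping.single j 1) 1"

text \<open>lam (x) 1 in S_T, for lam in X-hat (basis e_i of X indexed by Some i, and (0,1) by None)\<close>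
definition iota :: "(('i::finite \<Rightarrow> int) \<times> int) \<Rightarrow> ('i, 'T::comm_ring_1) ST" where
  "iota x = (\<Sum>i\<in>UNIV. of_int (fst x i) * var (Some i)) + of_int (snd x) * var None"

definition emb :: "('i::{finite,linorder}, 'T::idom) ST \<Rightarrow> ('i, 'T) ST fract" where
  "emb p = Fract p 1"

text \<open>Elements of the direct sum over I(s) are functions on index tuples (nat lists), zero outside I(s)\<close>
type_synonym ('i, 'T) vec = "nat list \<Rightarrow> ('i, 'T) ST fract"

definition Iset :: "nat \<Rightarrow> nat list set" where
  "Iset l = {sig. sorted_wrt (<) sig \<and> set sig \<subseteq> {1..l}}"

definition supp_in :: "nat list set \<Rightarrow> ('i::{finite,linorder}, 'T::idom) vec \<Rightarrow> bool" where
  "supp_in I z \<longleftrightarrow> (\<forall>sig. sig \<notin> I \<longrightarrow> z sig = 0)"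

text \<open>Delta, Delta^- : sum over I(s') --> sum over I(s), where l = length s\<close>
definition Delta :: "nat \<Rightarrow> ('i::{finite,linorder}, 'T::idom) vec \<Rightarrow> ('i, 'T) vec" where
  "Delta l z sig = (if sig \<in> Iset (l - 1) then z sig
      else if sig \<noteq> [] \<and> last sig = l \<and> butlast sig \<in> Iset (l - 1) then z (butlast sig) else 0)"

definition Deltam :: "nat \<Rightarrow> ('i::{finite,linorder}, 'T::idom) vec \<Rightarrow> ('i, 'T) vec" where
  "Deltam l z sig = (if sig \<in> Iset (l - 1) then z sig
      else if sig \<noteq> [] \<and> last sig = l \<and> butlast sig \<in> Iset (l - 1) then - z (butlast sig) else 0)"

definition Deltaf :: "nat \<Rightarrow> (('i::{finite,linorder}, 'T::idom) vec \<Rightarrow> ('i, 'T) vec) \<Rightarrow> ('i, 'T) vec \<Rightarrow> ('i, 'T) vec" where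
  "Deltaf l f z = (THE w. \<exists>x y. supp_in (Iset (l - 1)) x \<and> supp_in (Iset (l - 1)) y \<and>
        z = (\<lambda>sig. Delta l x sig + Deltam l y sig) \<and> w = (\<lambda>sig. Delta l (f x) sig + Deltam l (f y) sig))"

definition cmul :: "(('i::{finite,linorder} \<Rightarrow> int) \<Rightarrow> ('i \<Rightarrow> int)) \<Rightarrow> (('i \<Rightarrow> int) \<times> int) list
    \<Rightarrow> (('i \<Rightarrow> int) \<times> int) \<Rightarrow> ('i, 'T::idom) vec \<Rightarrow> ('i, 'T) vec" where
  "cmul cor s lam z sig = emb (iota (ev cor s sig lam)) * z sig"

definition cinv :: "(('i::{finite,linorder} \<Rightarrow> int) \<Rightarrow> ('i \<Rightarrow> int)) \<Rightarrow> (('i \<Rightarrow> int) \<times> int) list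
    \<Rightarrow> (('i \<Rightarrow> int) \<times> int) \<Rightarrow> ('i, 'T::idom) vec \<Rightarrow> ('i, 'T) vec" where
  "cinv cor s lam z sig = inverse (emb (iota (ev cor s sig lam))) * z sig"

text \<open>The recursions are over the sequence s = (s_1,...,s_l); we recurse on rev s,
  so that the head of the reversed list is s_l and its tail is rev s'.\<close>

definition unitvec :: "('i::{finite,linorder}, 'T::idom) ST fract \<Rightarrow> ('i, 'T) vec" where
  "unitvec q = (\<lambda>sig. if sig = [] then q else 0)"

primrec Prev :: "('i::{finite,linorder} \<Rightarrow> int) \<Rightarrow> (('i \<Rightarrow> int) \<Rightarrow> ('i \<Rightarrow> int))
    \<Rightarrow> (('i \<Rightarrow> int) \<times> int) list \<Rightarrow> ('i, 'T::idom) vec \<Rightarrow> ('i, 'T) vec" where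
  "Prev g cor [] = id"
| "Prev g cor (t # rs) = cmul cor (rev (t # rs)) (sroot g t) \<circ> Deltaf (Suc (length rs)) (Prev g cor rs)"

definition P :: "('i::{finite,linorder} \<Rightarrow> int) \<Rightarrow> (('i \<Rightarrow> int) \<Rightarrow> ('i \<Rightarrow> int))
    \<Rightarrow> (('i \<Rightarrow> int) \<times> int) list \<Rightarrow> ('i, 'T::idom) vec \<Rightarrow> ('i, 'T) vec" where
  "P g cor s = Prev g cor (rev s)"

primrec Erev :: "('i::{finite,linorder} \<Rightarrow> int) \<Rightarrow> (('i \<Rightarrow> int) \<Rightarrow> ('i \<Rightarrow> int))
    \<Rightarrow> (('i \<Rightarrow> int) \<times> int) list \<Rightarrow> ('i, 'T::idom) vec set" where
  "Erev g cor [] = {unitvec 1}"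
| "Erev g cor (t # rs) = Delta (Suc (length rs)) ` Erev g cor rs
     \<union> (cmul cor (rev (t # rs)) (sroot g t) \<circ> Delta (Suc (length rs))) ` Erev g cor rs"

primrec Frev :: "('i::{finite,linorder} \<Rightarrow> int) \<Rightarrow> (('i \<Rightarrow> int) \<Rightarrow> ('i \<Rightarrow> int))
    \<Rightarrow> (('i \<Rightarrow> int) \<times> int) list \<Rightarrow> ('i, 'T::idom) vec set" where
  "Frev g cor [] = {unitvec 1}"
| "Frev g cor (t # rs) = Delta (Suc (length rs)) ` Frev g cor rs
     \<union> (cinv cor (rev (t # rs)) (sroot g t) \<circ> Delta (Suc (length rs))) ` Frev g cor rs"

primrec Xrev :: "('i::{finite,linorder} \<Rightarrow> int) \<Rightarrow> (('i \<Rightarrow> int) \<Rightarrow> ('i \<Rightarrow> int))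
    \<Rightarrow> (('i \<Rightarrow> int) \<times> int) list \<Rightarrow> ('i, 'T::idom) vec set" where
  "Xrev g cor [] = {unitvec (emb p) | p. True}"
| "Xrev g cor (t # rs) = {(\<lambda>sig. Delta (Suc (length rs)) x sig
       + cmul cor (rev (t # rs)) (sroot g t) (Delta (Suc (length rs)) y) sig) | x y.
       x \<in> Xrev g cor rs \<and> y \<in> Xrev g cor rs}"

primrec Yrev :: "('i::{finite,linorder} \<Rightarrow> int) \<Rightarrow> (('i \<Rightarrow> int) \<Rightarrow> ('i \<Rightarrow> int))
    \<Rightarrow> (('i \<Rightarrow> int) \<times> int) list \<Rightarrow> ('i, 'T::idom) vec set" where
  "Yrev g cor [] = {unitvec (emb p) | p. True}"
| "Yrev g cor (t # rs) = {(\<lambda>sig. Delta (Suc (length rs)) x sig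
       + cinv cor (rev (t # rs)) (sroot g t) (Delta (Suc (length rs)) y) sig) | x y.
       x \<in> Yrev g cor rs \<and> y \<in> Yrev g cor rs}"

definition ET where "ET g cor s = Erev g cor (rev s)"
definition FT where "FT g cor s = Frev g cor (rev s)"
definition XT where "XT g cor s = Xrev g cor (rev s)"
definition YT where "YT g cor s = Yrev g cor (rev s)"

end

theory Submission
  imports Defs
begin

lemma two_ST_nz:
  assumes "(2::'T::idom) \<noteq> 0"
  shows "(2::('i::{finite,linorder},'T) ST fract) \<noteq> 0"
proof -
  have "Poly_Mapping.lookup (2 :: ('i,'T) ST) 0 = 2"
    by (simp only: one_add_one[symmetric] Poly_Mapping.lookup_add Poly_Mapping.lookup_one_zero)
  hence a: "(2 :: ('i,'T) ST) \<noteq> 0" using assms by auto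
  have "(1::('i,'T) ST fract) + 1 = Fract 2 1"
    by (simp add: One_fract_def)
  hence "(2::('i,'T) ST fract) = Fract 2 1" by simp
  also have "\<dots> \<noteq> 0" using a by (simp add: Zero_fract_def eq_fract)
  finally show ?thesis .
qed

lemma emb_nz: "p \<noteq> 0 \<Longrightarrow> emb p \<noteq> 0"
  by (simp add: emb_def Zero_fract_def eq_fract)

lemma aux2: "(a + b) + (a - b) = 2 * (a::'a::comm_ring_1)"
  by (simp add: algebra_simps)
lemma half1: "(2::'a::field) \<noteq> 0 \<Longrightarrow> (a + b) / 2 + (a - b) / 2 = (a::'a)"
proof -
  assume t: "(2::'a) \<noteq> 0"
  have "(a + b) / 2 + (a - b) / 2 = ((a + b) + (a - b)) / 2" by (rule add_divide_distrib[symmetric])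
  also have "\<dots> = (2 * a) / 2" by (simp only: aux2)
  also have "\<dots> = a" using t by simp
  finally show ?thesis .
qed
lemma half2: "(2::'a::field) \<noteq> 0 \<Longrightarrow> (a + b) / 2 - (a - b) / 2 = (b::'a)"
proof -
  assume t: "(2::'a) \<noteq> 0"
  have "(a + b) / 2 - (a - b) / 2 = ((a + b) - (a - b)) / 2" by (rule diff_divide_distrib[symmetric])
  also have "(a + b) - (a - b) = 2 * b" by (simp add: algebra_simps)
  also have "(2 * b) / 2 = b" using t by simp
  finally show ?thesis .
qed

lemma Iset_mono: "sig \<in> Iset n \<Longrightarrow> sig \<in> Iset (Suc n)"
  by (auto simp: Iset_def)

lemma Iset_snoc: "sig \<in> Iset n \<Longrightarrow> sig @ [Suc n] \<in> Iset (Suc n) \<and> sig @ [Suc n] \<notin> Iset n"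
  by (auto simp: Iset_def sorted_wrt_append)

lemma Iset_second: "sig \<noteq> [] \<Longrightarrow> last sig = Suc n \<Longrightarrow> butlast sig \<in> Iset n \<Longrightarrow> sig \<in> Iset (Suc n)"
  by (metis Iset_snoc append_butlast_last_id)

lemma Iset_split:
  assumes "sig \<in> Iset (Suc n)" "sig \<notin> Iset n"
  shows "sig \<noteq> [] \<and> last sig = Suc n \<and> butlast sig \<in> Iset n"
proof -
  have ne: "sig \<noteq> []" using assms by (auto simp: Iset_def)
  define b where "b = butlast sig"
  define c where "c = last sig"
  have sg: "sig = b @ [c]" using ne by (simp add: b_def c_def)
  have s: "sorted_wrt (<) (b @ [c])" "set (b @ [c]) \<subseteq> {1..Suc n}"
    using assms(1) sg by (auto simp: Iset_def)
  hence lt: "\<forall>x\<in>set b. x < c" "sorted_wrt (<) b" by (auto simp: sorted_wrt_append)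
  have "c \<le> Suc n" "1 \<le> c" using s by auto
  have "c = Suc n"
  proof (rule ccontr)
    assume "c \<noteq> Suc n"
    hence "c \<le> n" using \<open>c \<le> Suc n\<close> by simp
    hence "sig \<in> Iset n" using s sg lt by (force simp: Iset_def)
    thus False using assms by simp
  qed
  moreover have "b \<in> Iset n" using lt s \<open>c = Suc n\<close> by (force simp: Iset_def)
  ultimately show ?thesis using ne by (simp add: b_def c_def)
qed

definition diag :: "(nat list \<Rightarrow> 'a::times) \<Rightarrow> (nat list \<Rightarrow> 'a) \<Rightarrow> nat list \<Rightarrow> 'a" where
  "diag p z = (\<lambda>sig. p sig * z sig)"

definition extp :: "nat \<Rightarrow> (nat list \<Rightarrow> 'a) \<Rightarrow> nat list \<Rightarrow> 'a" where
  "extp n p sig = (if sig \<in> Iset n then p sig else p (butlast sig))"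

lemma Delta_supp: "supp_in (Iset (Suc n)) (Delta (Suc n) z)"
  unfolding supp_in_def
proof (intro allI impI)
  fix sig assume a: "sig \<notin> Iset (Suc n)"
  hence "sig \<notin> Iset n" using Iset_mono by blast
  moreover have "\<not> (sig \<noteq> [] \<and> last sig = Suc n \<and> butlast sig \<in> Iset n)" using a Iset_second by blast
  ultimately show "Delta (Suc n) z sig = 0" by (auto simp: Delta_def)
qed

lemma Deltam_supp: "supp_in (Iset (Suc n)) (Deltam (Suc n) z)"
  unfolding supp_in_def
proof (intro allI impI)
  fix sig assume a: "sig \<notin> Iset (Suc n)"
  hence "sig \<notin> Iset n" using Iset_mono by blast
  moreover have "\<not> (sig \<noteq> [] \<and> last sig = Suc n \<and> butlast sig \<in> Iset n)" using a Iset_second by blast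
  ultimately show "Deltam (Suc n) z sig = 0" by (auto simp: Deltam_def)
qed

lemma decomp_unique:
  fixes x1 y1 x2 y2 :: "('i::{finite,linorder}, 'T::idom) vec"
  assumes two: "(2::('i,'T) ST fract) \<noteq> 0"
    and s: "supp_in (Iset n) x1" "supp_in (Iset n) y1" "supp_in (Iset n) x2" "supp_in (Iset n) y2"
    and e: "(\<lambda>sig. Delta (Suc n) x1 sig + Deltam (Suc n) y1 sig) = (\<lambda>sig. Delta (Suc n) x2 sig + Deltam (Suc n) y2 sig)"
  shows "x1 = x2 \<and> y1 = y2"
proof -
  have "x1 sig = x2 sig \<and> y1 sig = y2 sig" for sig
  proof (cases "sig \<in> Iset n")
    case True
    have e1: "x1 sig + y1 sig = x2 sig + y2 sig"
      using fun_cong[OF e, of sig] True by (simp add: Delta_def Deltam_def)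
    have sn: "sig @ [Suc n] \<notin> Iset n" using Iset_snoc True by blast
    have e2: "x1 sig - y1 sig = x2 sig - y2 sig"
      using fun_cong[OF e, of "sig @ [Suc n]"] True sn by (simp add: Delta_def Deltam_def)
    have "2 * x1 sig = (x1 sig + y1 sig) + (x1 sig - y1 sig)" by (rule aux2[symmetric])
    also have "\<dots> = (x2 sig + y2 sig) + (x2 sig - y2 sig)" by (simp only: e1 e2)
    also have "\<dots> = 2 * x2 sig" by (rule aux2)
    finally have "2 * x1 sig = 2 * x2 sig" .
    hence "x1 sig = x2 sig" using two by simp
    thus ?thesis using e1 by simp
  next
    case False thus ?thesis using s by (simp add: supp_in_def)
  qed
  thus ?thesis by auto
qed

lemma Deltaf_diag:
  fixes z :: "('i::{finite,linorder}, 'T::idom) vec"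
  assumes two: "(2::('i,'T) ST fract) \<noteq> 0"
    and sz: "supp_in (Iset (Suc n)) z"
    and f: "\<And>x. supp_in (Iset n) x \<Longrightarrow> f x = diag p x"
  shows "Deltaf (Suc n) f z = diag (extp n p) z"
proof -
  define x0 :: "('i,'T) vec" where "x0 = (\<lambda>sig. if sig \<in> Iset n then (z sig + z (sig @ [Suc n])) / 2 else 0)"
  define y0 :: "('i,'T) vec" where "y0 = (\<lambda>sig. if sig \<in> Iset n then (z sig - z (sig @ [Suc n])) / 2 else 0)"
  have sx: "supp_in (Iset n) x0" "supp_in (Iset n) y0" by (auto simp: supp_in_def x0_def y0_def)
  note half = half1[OF two] half2[OF two]
  have dec: "z = (\<lambda>sig. Delta (Suc n) x0 sig + Deltam (Suc n) y0 sig)"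
  proof
    fix sig
    show "z sig = Delta (Suc n) x0 sig + Deltam (Suc n) y0 sig"
    proof (cases "sig \<in> Iset n")
      case True thus ?thesis by (simp add: Delta_def Deltam_def x0_def y0_def half)
    next
      case False
      show ?thesis
      proof (cases "sig \<noteq> [] \<and> last sig = Suc n \<and> butlast sig \<in> Iset n")
        case True
        hence "butlast sig @ [Suc n] = sig" by (metis append_butlast_last_id)
        thus ?thesis using True False by (simp add: Delta_def Deltam_def x0_def y0_def half)
      next
        case F2: False
        hence "sig \<notin> Iset (Suc n)" using Iset_split False by blast
        thus ?thesis using sz False F2 by (auto simp: supp_in_def Delta_def Deltam_def)
      qed
    qed
  qed
  define w0 where "w0 = (\<lambda>sig. Delta (Suc n) (f x0) sig + Deltam (Suc n) (f y0) sig)"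
  have "Deltaf (Suc n) f z = w0"
    unfolding Deltaf_def diff_Suc_1
  proof (rule the_equality)
    show "\<exists>x y. supp_in (Iset n) x \<and> supp_in (Iset n) y \<and> z = (\<lambda>sig. Delta (Suc n) x sig + Deltam (Suc n) y sig) \<and>
          w0 = (\<lambda>sig. Delta (Suc n) (f x) sig + Deltam (Suc n) (f y) sig)"
      using sx dec w0_def by blast
  next
    fix w assume "\<exists>x y. supp_in (Iset n) x \<and> supp_in (Iset n) y \<and> z = (\<lambda>sig. Delta (Suc n) x sig + Deltam (Suc n) y sig) \<and>
          w = (\<lambda>sig. Delta (Suc n) (f x) sig + Deltam (Suc n) (f y) sig)"
    then obtain x y where h: "supp_in (Iset n) x" "supp_in (Iset n) y" "z = (\<lambda>sig. Delta (Suc n) x sig + Deltam (Suc n) y sig)"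
      "w = (\<lambda>sig. Delta (Suc n) (f x) sig + Deltam (Suc n) (f y) sig)" by blast
    have "x = x0 \<and> y = y0" using decomp_unique[OF two h(1,2) sx] h(3) dec by simp
    thus "w = w0" using h(4) w0_def by simp
  qed
  also have "w0 = diag (extp n p) z"
  proof
    fix sig
    show "w0 sig = diag (extp n p) z sig"
    proof (cases "sig \<in> Iset n")
      case True
      have "w0 sig = p sig * x0 sig + p sig * y0 sig"
        using True by (simp add: w0_def Delta_def Deltam_def f[OF sx(1)] f[OF sx(2)] diag_def)
      also have "\<dots> = p sig * (x0 sig + y0 sig)" by (simp only: distrib_left)
      also have "x0 sig + y0 sig = z sig" using True by (simp add: x0_def y0_def half)
      finally show ?thesis using True by (simp add: diag_def extp_def)
    next
      case False
      show ?thesis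
      proof (cases "sig \<noteq> [] \<and> last sig = Suc n \<and> butlast sig \<in> Iset n")
        case True
        define b where "b = butlast sig"
        have e: "b @ [Suc n] = sig" using True unfolding b_def by (metis append_butlast_last_id)
        have bI: "b \<in> Iset n" using True b_def by simp
        have "w0 sig = p b * x0 b + - (p b * y0 b)"
          using True False by (simp add: w0_def Delta_def Deltam_def f[OF sx(1)] f[OF sx(2)] diag_def b_def)
        also have "\<dots> = p b * (x0 b - y0 b)" by (simp add: right_diff_distrib)
        also have "x0 b - y0 b = z sig" using bI e by (simp add: x0_def y0_def half)
        finally show ?thesis using False by (simp add: diag_def extp_def b_def)
      next
        case F2: False
        hence "sig \<notin> Iset (Suc n)" using Iset_split False by blast
        thus ?thesis using sz False F2 by (auto simp: supp_in_def w0_def Delta_def Deltam_def diag_def)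
      qed
    qed
  qed
  finally show ?thesis .
qed


primrec pv :: "('i::{finite,linorder} \<Rightarrow> int) \<Rightarrow> (('i \<Rightarrow> int) \<Rightarrow> ('i \<Rightarrow> int))
    \<Rightarrow> (('i \<Rightarrow> int) \<times> int) list \<Rightarrow> nat list \<Rightarrow> ('i, 'T::idom) ST fract" where
  "pv g cor [] = (\<lambda>_. 1)"
| "pv g cor (t # rs) = (\<lambda>sig. emb (iota (ev cor (rev (t # rs)) sig (sroot g t))) * extp (length rs) (pv g cor rs) sig)"

lemma Prev_diag:
  fixes z :: "('i::{finite,linorder}, 'T::idom) vec"
  assumes two: "(2::('i,'T) ST fract) \<noteq> 0"
  shows "supp_in (Iset (length rs)) z \<Longrightarrow> Prev g cor rs z = diag (pv g cor rs) z"
proof (induction rs arbitrary: z)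
  case Nil thus ?case by (simp add: diag_def)
next
  case (Cons t rs)
  have "Deltaf (Suc (length rs)) (Prev g cor rs) z = diag (extp (length rs) (pv g cor rs)) z"
    using Cons.prems by (intro Deltaf_diag[OF two]) (simp_all add: Cons.IH)
  thus ?case by (simp add: cmul_def diag_def mult.assoc)
qed

lemma Delta_diag: "Delta (Suc n) (diag q f) = diag (extp n q) (Delta (Suc n) f)"
  by (auto simp: Delta_def diag_def extp_def fun_eq_iff)

lemma supp_diag: "supp_in I z \<Longrightarrow> supp_in I (diag q z)"
  by (simp add: supp_in_def diag_def)

lemma supp_cmul: "supp_in I z \<Longrightarrow> supp_in I (cmul cor s lam z)"
  by (simp add: supp_in_def cmul_def)

lemma supp_cinv: "supp_in I z \<Longrightarrow> supp_in I (cinv cor s lam z)"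
  by (simp add: supp_in_def cinv_def)

lemma supp_add: "supp_in I u \<Longrightarrow> supp_in I v \<Longrightarrow> supp_in I (\<lambda>sig. u sig + v sig)"
  by (simp add: supp_in_def)

lemma aff_iff: "v \<in> affine_roots R \<longleftrightarrow> fst v \<in> R"
  by (cases v) (auto simp: affine_roots_def)

lemma act_aff:
  assumes RD: "irreducible_reduced_root_datum R cor" and "fst t \<in> R" and "v \<in> affine_roots R"
  shows "act cor t v \<in> affine_roots R"
proof -
  have "fst (act cor t v) = reflX cor (fst t) (fst v)"
    by (simp add: act_def reflX_def Let_def)
  moreover have "\<forall>a\<in>R. \<forall>b\<in>R. reflX cor a b \<in> R"
    using RD unfolding irreducible_reduced_root_datum_def by (elim conjE) assumption
  hence "reflX cor (fst t) (fst v) \<in> R"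
    using assms(2,3) unfolding aff_iff by blast
  ultimately show ?thesis by (simp add: aff_iff)
qed

lemma ev_aff:
  assumes RD: "irreducible_reduced_root_datum R cor"
    and A: "\<forall>t\<in>set s. fst t \<in> R" and v: "v \<in> affine_roots R"
  shows "set sig \<subseteq> {1..length s} \<Longrightarrow> ev cor s sig v \<in> affine_roots R"
proof (induction sig)
  case Nil thus ?case using v by (simp add: ev_def)
next
  case (Cons j sig)
  have "s ! (j - 1) \<in> set s" using Cons.prems by auto
  hence "fst (s ! (j - 1)) \<in> R" using A by blast
  moreover have "ev cor s sig v \<in> affine_roots R" using Cons by simp
  ultimately have "act cor (s ! (j - 1)) (ev cor s sig v) \<in> affine_roots R"
    using act_aff[OF RD] by blast
  thus ?case by (simp add: ev_def)
qed

declare Prev.simps(2)[simp del] pv.simps(2)[simp del]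

lemma main_ind:
  fixes R :: "('i::{finite,linorder} \<Rightarrow> int) set"
  assumes two: "(2::('i,'T::idom) ST fract) \<noteq> 0"
    and RD: "irreducible_reduced_root_datum R cor"
    and nz: "\<forall>a\<in>affine_roots R. (iota a :: ('i, 'T) ST) \<noteq> 0"
  shows "(\<forall>t\<in>set rs. fst t \<in> R \<and> sroot g t \<in> affine_roots R) \<Longrightarrow>
    (\<forall>f\<in>(Frev g cor rs :: ('i,'T) vec set). supp_in (Iset (length rs)) f) \<and>
    (\<forall>f\<in>(Yrev g cor rs :: ('i,'T) vec set). supp_in (Iset (length rs)) f) \<and>
    (Erev g cor rs :: ('i,'T) vec set) = Prev g cor rs ` Frev g cor rs \<and>
    (Xrev g cor rs :: ('i,'T) vec set) = Prev g cor rs ` Yrev g cor rs"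
proof (induction rs)
  case Nil
  show ?case by (auto simp: supp_in_def unitvec_def Iset_def)
next
  case (Cons t rs)
  define n where "n = length rs"
  define s where "s = rev (t # rs)"
  define al where "al = sroot g t"
  have IH: "\<forall>f\<in>(Frev g cor rs :: ('i,'T) vec set). supp_in (Iset n) f" "\<forall>f\<in>(Yrev g cor rs :: ('i,'T) vec set). supp_in (Iset n) f"
    "(Erev g cor rs :: ('i,'T) vec set) = Prev g cor rs ` Frev g cor rs"
    "(Xrev g cor rs :: ('i,'T) vec set) = Prev g cor rs ` Yrev g cor rs"
    using Cons.IH Cons.prems by (auto simp: n_def)
  have ls: "length s = Suc n" by (simp add: s_def n_def)
  have As: "\<forall>t\<in>set s. fst t \<in> R" using Cons.prems by (auto simp: s_def)
  have alA: "al \<in> affine_roots R" using Cons.prems by (simp add: al_def)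
  have anz: "emb (iota (ev cor s sig al) :: ('i,'T) ST) \<noteq> 0" if "sig \<in> Iset (Suc n)" for sig
  proof -
    have "set sig \<subseteq> {1..length s}" using that ls by (simp add: Iset_def)
    hence "ev cor s sig al \<in> affine_roots R" using ev_aff[OF RD As alA] by blast
    thus ?thesis using nz emb_nz by blast
  qed
  have Pt: "Prev g cor (t # rs) z = diag (pv g cor (t # rs)) z" if "supp_in (Iset (Suc n)) z"
    for z :: "('i,'T) vec"
    using Prev_diag[OF two, of "t # rs" z g cor] that by (simp only: n_def length_Cons)
  have Pr: "Prev g cor rs z = diag (pv g cor rs) z" if "supp_in (Iset n) z" for z :: "('i,'T) vec"
    using Prev_diag[OF two, of rs z g cor] that by (simp only: n_def)
  have pvt: "pv g cor (t # rs) = (\<lambda>sig. emb (iota (ev cor s sig al)) * extp n (pv g cor rs) sig)"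
    by (simp add: s_def al_def n_def pv.simps(2))
  have K1: "Prev g cor (t # rs) (Delta (Suc n) f) = cmul cor s al (Delta (Suc n) (Prev g cor rs f))"
    if "supp_in (Iset n) f" for f :: "('i,'T) vec"
  proof -
    have "Prev g cor (t # rs) (Delta (Suc n) f) = diag (pv g cor (t # rs)) (Delta (Suc n) f)"
      by (rule Pt[OF Delta_supp])
    also have "\<dots> = cmul cor s al (diag (extp n (pv g cor rs)) (Delta (Suc n) f))"
      unfolding pvt cmul_def diag_def by (simp add: mult.assoc)
    also have "diag (extp n (pv g cor rs)) (Delta (Suc n) f) = Delta (Suc n) (diag (pv g cor rs) f)"
      by (simp add: Delta_diag)
    also have "diag (pv g cor rs) f = Prev g cor rs f" using Pr that by simp
    finally show ?thesis .
  qed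
  have K2: "Prev g cor (t # rs) (cinv cor s al (Delta (Suc n) f)) = Delta (Suc n) (Prev g cor rs f)"
    if "supp_in (Iset n) f" for f :: "('i,'T) vec"
  proof -
    have "Prev g cor (t # rs) (cinv cor s al (Delta (Suc n) f)) = diag (pv g cor (t # rs)) (cinv cor s al (Delta (Suc n) f))"
      by (intro Pt supp_cinv Delta_supp)
    also have "\<dots> = diag (extp n (pv g cor rs)) (Delta (Suc n) f)"
    proof
      fix sig
      show "diag (pv g cor (t # rs)) (cinv cor s al (Delta (Suc n) f)) sig = diag (extp n (pv g cor rs)) (Delta (Suc n) f) sig"
      proof (cases "sig \<in> Iset (Suc n)")
        case True
        thus ?thesis using anz[OF True] unfolding pvt diag_def cinv_def by simp
      next
        case False
        hence "Delta (Suc n) f sig = 0" using Delta_supp unfolding supp_in_def by blast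
        thus ?thesis by (simp add: diag_def cinv_def)
      qed
    qed
    also have "\<dots> = Delta (Suc n) (Prev g cor rs f)" using that by (simp add: Pr Delta_diag)
    finally show ?thesis .
  qed
  have Lin: "Prev g cor (t # rs) (\<lambda>sig. u sig + v sig) = (\<lambda>sig. Prev g cor (t # rs) u sig + Prev g cor (t # rs) v sig)"
    if "supp_in (Iset (Suc n)) u" "supp_in (Iset (Suc n)) v" for u v :: "('i,'T) vec"
    using that by (simp add: Pt supp_add diag_def distrib_left)
  have Fr: "(Frev g cor (t # rs) :: ('i,'T) vec set) = Delta (Suc n) ` Frev g cor rs \<union> (cinv cor s al \<circ> Delta (Suc n)) ` Frev g cor rs"
    by (simp add: s_def al_def n_def)
  have Er: "(Erev g cor (t # rs) :: ('i,'T) vec set) = Delta (Suc n) ` Erev g cor rs \<union> (cmul cor s al \<circ> Delta (Suc n)) ` Erev g cor rs"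
    by (simp add: s_def al_def n_def)
  have Yr: "(Yrev g cor (t # rs) :: ('i,'T) vec set) = {(\<lambda>sig. Delta (Suc n) x sig + cinv cor s al (Delta (Suc n) y) sig) | x y.
       x \<in> Yrev g cor rs \<and> y \<in> Yrev g cor rs}"
    by (simp add: s_def al_def n_def)
  have Xr: "(Xrev g cor (t # rs) :: ('i,'T) vec set) = {(\<lambda>sig. Delta (Suc n) x sig + cmul cor s al (Delta (Suc n) y) sig) | x y.
       x \<in> Xrev g cor rs \<and> y \<in> Xrev g cor rs}"
    by (simp add: s_def al_def n_def)
  have S1: "\<forall>f\<in>(Frev g cor (t # rs) :: ('i,'T) vec set). supp_in (Iset (Suc n)) f"
    unfolding Fr by (auto intro: Delta_supp supp_cinv)
  have S2: "\<forall>f\<in>(Yrev g cor (t # rs) :: ('i,'T) vec set). supp_in (Iset (Suc n)) f"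
    unfolding Yr by (auto intro!: supp_add Delta_supp supp_cinv)
  have E: "(Erev g cor (t # rs) :: ('i,'T) vec set) = Prev g cor (t # rs) ` Frev g cor (t # rs)"
  proof -
    have a: "Prev g cor (t # rs) ` (Delta (Suc n) ` (Frev g cor rs :: ('i,'T) vec set)) = (cmul cor s al \<circ> Delta (Suc n)) ` (Prev g cor rs ` Frev g cor rs)"
      unfolding image_comp by (rule image_cong[OF refl]) (use IH(1) K1 in auto)
    have b: "Prev g cor (t # rs) ` ((cinv cor s al \<circ> Delta (Suc n)) ` (Frev g cor rs :: ('i,'T) vec set)) = Delta (Suc n) ` (Prev g cor rs ` Frev g cor rs)"
      unfolding image_comp by (rule image_cong[OF refl]) (use IH(1) K2 in auto)
    show ?thesis unfolding Er Fr image_Un a b IH(3) by blast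
  qed
  have K4: "Prev g cor (t # rs) (\<lambda>sig. Delta (Suc n) x sig + cinv cor s al (Delta (Suc n) y) sig)
      = (\<lambda>sig. Delta (Suc n) (Prev g cor rs y) sig + cmul cor s al (Delta (Suc n) (Prev g cor rs x)) sig)"
    if "x \<in> Yrev g cor rs" "y \<in> Yrev g cor rs" for x y :: "('i,'T) vec"
  proof -
    have sx: "supp_in (Iset n) x" "supp_in (Iset n) y" using that IH(2) by auto
    show ?thesis
      by (subst Lin) (auto intro: Delta_supp supp_cinv simp: K1[OF sx(1)] K2[OF sx(2)] add.commute)
  qed
  have X: "(Xrev g cor (t # rs) :: ('i,'T) vec set) = Prev g cor (t # rs) ` (Yrev g cor (t # rs) :: ('i,'T) vec set)"
  proof
    show "(Xrev g cor (t # rs) :: ('i,'T) vec set) \<subseteq> Prev g cor (t # rs) ` (Yrev g cor (t # rs) :: ('i,'T) vec set)"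
    proof
      fix w :: "('i,'T) vec" assume w: "w \<in> Xrev g cor (t # rs)"
      from w[unfolded Xr IH(4)] obtain x y where h: "w = (\<lambda>sig. Delta (Suc n) x sig + cmul cor s al (Delta (Suc n) y) sig)"
        "x \<in> Prev g cor rs ` Yrev g cor rs" "y \<in> Prev g cor rs ` Yrev g cor rs"
        by blast
      then obtain x' y' where h2: "x = Prev g cor rs x'" "y = Prev g cor rs y'" "x' \<in> Yrev g cor rs" "y' \<in> Yrev g cor rs"
        by blast
      have "w = Prev g cor (t # rs) (\<lambda>sig. Delta (Suc n) y' sig + cinv cor s al (Delta (Suc n) x') sig)"
        using K4[OF h2(4,3)] h(1) h2(1,2) by simp
      moreover have "(\<lambda>sig. Delta (Suc n) y' sig + cinv cor s al (Delta (Suc n) x') sig) \<in> Yrev g cor (t # rs)"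
        unfolding Yr using h2 by blast
      ultimately show "w \<in> Prev g cor (t # rs) ` (Yrev g cor (t # rs) :: ('i,'T) vec set)" by blast
    qed
  next
    show "Prev g cor (t # rs) ` (Yrev g cor (t # rs) :: ('i,'T) vec set) \<subseteq> (Xrev g cor (t # rs) :: ('i,'T) vec set)"
    proof
      fix w :: "('i,'T) vec" assume w: "w \<in> Prev g cor (t # rs) ` (Yrev g cor (t # rs) :: ('i,'T) vec set)"
      from w[unfolded Yr] obtain x y where h: "w = Prev g cor (t # rs) (\<lambda>sig. Delta (Suc n) x sig + cinv cor s al (Delta (Suc n) y) sig)"
        "x \<in> Yrev g cor rs" "y \<in> Yrev g cor rs"
        by blast
      have "w = (\<lambda>sig. Delta (Suc n) (Prev g cor rs y) sig + cmul cor s al (Delta (Suc n) (Prev g cor rs x)) sig)"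
        using K4[OF h(2,3)] h(1) by simp
      thus "w \<in> Xrev g cor (t # rs)" unfolding Xr IH(4) using h(2,3) by blast
    qed
  qed
  show ?case using S1 S2 E X by (simp add: n_def)
qed

theorem lemma6p13:
  fixes R Pi :: "('i::{finite,linorder} \<Rightarrow> int) set"
    and cor :: "('i \<Rightarrow> int) \<Rightarrow> ('i \<Rightarrow> int)"
    and g :: "'i \<Rightarrow> int"
    and s :: "(('i \<Rightarrow> int) \<times> int) list"
  assumes "irreducible_reduced_root_datum R cor"
    and "is_base R Pi"
    and "highest_root R Pi g"
    and "(2::'T::idom) \<noteq> 0"
    and "\<forall>a\<in>affine_roots R. (iota a :: ('i, 'T) ST) \<noteq> 0"
    and "set s \<subseteq> Shat Pi g"
  shows "(ET g cor s :: ('i, 'T) vec set) = P g cor s ` FT g cor s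
       \<and> (XT g cor s :: ('i, 'T) vec set) = P g cor s ` YT g cor s"
proof -
  note RD = assms(1)
  have two: "(2::('i,'T) ST fract) \<noteq> 0" by (rule two_ST_nz[OF assms(4)])
  have PiR: "Pi \<subseteq> R" using assms(2) by (simp add: is_base_def)
  have gR: "g \<in> R" using assms(3) by (simp add: highest_root_def pos_roots_def)
  have cl: "\<forall>a\<in>R. \<forall>b\<in>R. reflX cor a b \<in> R"
    using RD unfolding irreducible_reduced_root_datum_def by (elim conjE) assumption
  have p2: "\<forall>a\<in>R. pair a (cor a) = 2"
    using RD unfolding irreducible_reduced_root_datum_def by (elim conjE) assumption
  have "reflX cor g g = (\<lambda>i. - g i)"
    using p2 gR by (simp add: reflX_def fun_eq_iff)
  hence mgR: "(\<lambda>i. - g i) \<in> R" using cl gR by metis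
  have good: "\<forall>t\<in>set (rev s). fst t \<in> R \<and> sroot g t \<in> affine_roots R"
  proof
    fix t assume "t \<in> set (rev s)"
    hence "t \<in> Shat Pi g" using assms(6) by auto
    hence "t = (g, 1) \<or> (\<exists>a\<in>Pi. t = (a, 0))" by (auto simp: Shat_def)
    thus "fst t \<in> R \<and> sroot g t \<in> affine_roots R"
    proof
      assume "t = (g, 1)" thus ?thesis using gR mgR by (simp add: sroot_def aff_iff)
    next
      assume "\<exists>a\<in>Pi. t = (a, 0)"
      then obtain a where "a \<in> Pi" "t = (a, 0)" by blast
      thus ?thesis using PiR by (auto simp: sroot_def aff_iff)
    qed
  qed
  have "(Erev g cor (rev s) :: ('i,'T) vec set) = Prev g cor (rev s) ` Frev g cor (rev s) \<and>
    (Xrev g cor (rev s) :: ('i,'T) vec set) = Prev g cor (rev s) ` Yrev g cor (rev s)"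
    using main_ind[OF two RD assms(5) good] by blast
  thus ?thesis by (simp add: ET_def FT_def XT_def YT_def P_def)
qed

end
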